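(* In the $(3,2,2)$ scenario, the deterministic correlation $p(\vec x|\vec a)=\delta_{x_1,a_2\oplus a_3}\,\delta_{x_2,a_3\oplus a_1}\,\delta_{x_3,a_1\oplus a_2}$ cannot be realized by a process function; hence it is antinomic (not deterministically consistent), although its signalling graph is the complete directed graph on three vertices.
   Context: $(3,2,2)$ scenario: three parties with $a_k,x_k\in\{0,1\}$; $\oplus$ is addition mod 2. For finite sets $I_k,O_k$, $p(\vec i|\vec o)$ is a classical process if for all finite $A_k,X_k$ and all local interventions $p(x_k,o_k|a_k,i_k)$ the expression $\sum_{\vec i,\vec o}\prod_kp(x_k,o_k|a_k,i_k)p(\vec i|\vec o)$ is a valid conditional distribution over $\vec x$. A process function is $\omega:\vec O\to\vec I$ such that $\delta_{\vec i,\omega(\vec o)}$ is a classical process, equivalently such that for all $h=(h_k:I_k\to O_k)_k$ the map $\omega\circ h$ has a unique fixed point. A correlation is realized by $\omega$ if it equals $\sum_{\vec i,\vec o}\prod_kp(x_k,o_k|a_k,i_k)\delta_{\vec i,\omega(\vec o)}$ for some local interventions; it is deterministically consistent if it is of this form with $\delta_{\vec i,\omega(\vec o)}$ replaced by a convex combination of process functions, and antinomic otherwise. Signalling graph: edge $k\to l$ iff $f_l$ depends nontrivially on $a_k$. *)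

theory Defs
  imports Complex_Main
begin

text \<open>Settings a_k and outcomes x_k range over {0,1}, encoded as bool
  (False = 0, True = 1); addition mod 2 is then inequality (a \<noteq> b).\<close>

type_synonym bit3 = "bool \<times> bool \<times> bool"
type_synonym corr = "bit3 \<Rightarrow> bit3 \<Rightarrow> real"  \<comment> \<open>p x a = p(x|a)\<close>

definition xor2 :: "bool \<Rightarrow> bool \<Rightarrow> bool" where
  "xor2 a b = (a \<noteq> b)"

definition pr1 :: "'a \<times> 'b \<times> 'c \<Rightarrow> 'a" where "pr1 t = fst t"
definition pr2 :: "'a \<times> 'b \<times> 'c \<Rightarrow> 'b" where "pr2 t = fst (snd t)"
definition pr3 :: "'a \<times> 'b \<times> 'c \<Rightarrow> 'c" where "pr3 t = snd (snd t)"

definition comp :: "nat \<Rightarrow> 'a \<times> 'a \<times> 'a \<Rightarrow> 'a" where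
  "comp k t = (if k = 1 then pr1 t else if k = 2 then pr2 t else pr3 t)"

text \<open>A local intervention p(x_k,o_k|a_k,i_k), written P a i (x,o).\<close>
definition local_intervention :: "(bool \<Rightarrow> 'i::finite \<Rightarrow> bool \<times> 'o::finite \<Rightarrow> real) \<Rightarrow> bool" where
  "local_intervention P \<longleftrightarrow>
     (\<forall>a i xo. 0 \<le> P a i xo) \<and> (\<forall>a i. (\<Sum>xo\<in>UNIV. P a i xo) = 1)"

definition process_function ::
  "('o1 \<times> 'o2 \<times> 'o3 \<Rightarrow> 'i1 \<times> 'i2 \<times> 'i3) \<Rightarrow> bool" where
  "process_function \<omega> \<longleftrightarrow>
     (\<forall>(h1::'i1 \<Rightarrow> 'o1) (h2::'i2 \<Rightarrow> 'o2) (h3::'i3 \<Rightarrow> 'o3).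
        \<exists>!i. \<omega> (h1 (pr1 i), h2 (pr2 i), h3 (pr3 i)) = i)"

definition induced_corr ::
  "(bool \<Rightarrow> 'i1::finite \<Rightarrow> bool \<times> 'o1::finite \<Rightarrow> real) \<Rightarrow>
   (bool \<Rightarrow> 'i2::finite \<Rightarrow> bool \<times> 'o2::finite \<Rightarrow> real) \<Rightarrow>
   (bool \<Rightarrow> 'i3::finite \<Rightarrow> bool \<times> 'o3::finite \<Rightarrow> real) \<Rightarrow>
   ('i1 \<times> 'i2 \<times> 'i3 \<Rightarrow> 'o1 \<times> 'o2 \<times> 'o3 \<Rightarrow> real) \<Rightarrow> corr" where
  "induced_corr P1 P2 P3 W x a =
     (\<Sum>i\<in>UNIV. \<Sum>oo\<in>UNIV.
        P1 (pr1 a) (pr1 i) (pr1 x, pr1 oo) * P2 (pr2 a) (pr2 i) (pr2 x, pr2 oo) *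
        P3 (pr3 a) (pr3 i) (pr3 x, pr3 oo) * W i oo)"

definition realized_by ::
  "('o1::finite \<times> 'o2::finite \<times> 'o3::finite \<Rightarrow> 'i1::finite \<times> 'i2::finite \<times> 'i3::finite) \<Rightarrow> corr \<Rightarrow> bool" where
  "realized_by \<omega> p \<longleftrightarrow>
     (\<exists>(P1 :: bool \<Rightarrow> 'i1 \<Rightarrow> bool \<times> 'o1 \<Rightarrow> real) (P2 :: bool \<Rightarrow> 'i2 \<Rightarrow> bool \<times> 'o2 \<Rightarrow> real)
        (P3 :: bool \<Rightarrow> 'i3 \<Rightarrow> bool \<times> 'o3 \<Rightarrow> real).
        local_intervention P1 \<and> local_intervention P2 \<and> local_intervention P3 \<and>
        p = induced_corr P1 P2 P3 (\<lambda>i oo. if i = \<omega> oo then 1 else 0))"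

text \<open>p is deterministically consistent with input/output sets given by the type
  parameter: realized by a convex combination of process functions (a weight function
  on the finite set of all maps O \<Rightarrow> I, supported on process functions).\<close>
definition det_consistent ::
  "('o1::finite \<times> 'o2::finite \<times> 'o3::finite \<Rightarrow> 'i1::finite \<times> 'i2::finite \<times> 'i3::finite) itself \<Rightarrow> corr \<Rightarrow> bool" where
  "det_consistent _ p \<longleftrightarrow>
     (\<exists>(lam :: ('o1 \<times> 'o2 \<times> 'o3 \<Rightarrow> 'i1 \<times> 'i2 \<times> 'i3) \<Rightarrow> real)
        (P1 :: bool \<Rightarrow> 'i1 \<Rightarrow> bool \<times> 'o1 \<Rightarrow> real) (P2 :: bool \<Rightarrow> 'i2 \<Rightarrow> bool \<times> 'o2 \<Rightarrow> real)
        (P3 :: bool \<Rightarrow> 'i3 \<Rightarrow> bool \<times> 'o3 \<Rightarrow> real).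
        (\<forall>w. 0 \<le> lam w) \<and> (\<forall>w. lam w \<noteq> 0 \<longrightarrow> process_function w) \<and>
        (\<Sum>w\<in>UNIV. lam w) = 1 \<and>
        local_intervention P1 \<and> local_intervention P2 \<and> local_intervention P3 \<and>
        p = induced_corr P1 P2 P3 (\<lambda>i oo. \<Sum>w\<in>UNIV. lam w * (if i = w oo then 1 else 0)))"

definition det_corr :: "(bit3 \<Rightarrow> bit3) \<Rightarrow> corr" where
  "det_corr f x a = (if x = f a then 1 else 0)"

definition sig_edge :: "(bit3 \<Rightarrow> bit3) \<Rightarrow> nat \<Rightarrow> nat \<Rightarrow> bool" where
  "sig_edge f k l \<longleftrightarrow>
     (\<exists>a a'. (\<forall>j\<in>{1,2,3}. j \<noteq> k \<longrightarrow> comp j a = comp j a') \<and> comp l (f a) \<noteq> comp l (f a'))"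

definition f_xor :: "bit3 \<Rightarrow> bit3" where
  "f_xor a = (xor2 (pr2 a) (pr3 a), xor2 (pr3 a) (pr1 a), xor2 (pr1 a) (pr2 a))"

end

theory Submission
  imports Defs
begin

lemma sig_part: "\<forall>k\<in>{1,2,3}. \<forall>l\<in>{1,2,3}. sig_edge f_xor k l \<longleftrightarrow> k \<noteq> l"
  by (simp add: sig_edge_def f_xor_def comp_def pr1_def pr2_def pr3_def xor2_def
      split_paired_Ex ex_bool_eq)

lemma core:
  fixes \<omega> :: "'o1 \<times> 'o2 \<times> 'o3 \<Rightarrow> 'i1 \<times> 'i2 \<times> 'i3"
    and g1 :: "bool \<Rightarrow> 'i1 \<Rightarrow> bool \<times> 'o1"
    and g2 :: "bool \<Rightarrow> 'i2 \<Rightarrow> bool \<times> 'o2"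
    and g3 :: "bool \<Rightarrow> 'i3 \<Rightarrow> bool \<times> 'o3"
  assumes pf: "process_function \<omega>"
    and H: "\<And>a1 a2 i. \<omega> (snd (g1 a1 (pr1 i)), snd (g2 a2 (pr2 i)), snd (g3 False (pr3 i))) = i
            \<Longrightarrow> fst (g1 a1 (pr1 i)) = a2 \<and> fst (g2 a2 (pr2 i)) = a1"
  shows False
proof -
  define h3 where "h3 = (\<lambda>j. snd (g3 False j))"
  have E1: "\<And>h1 h2. \<exists>!i. \<omega> (h1 (pr1 i), h2 (pr2 i), h3 (pr3 i)) = i"
    using pf unfolding process_function_def by blast
  define FP where "FP o1 o2 = (THE i. \<omega> (o1, o2, h3 (pr3 i)) = i)" for o1 o2
  have FPfix: "\<omega> (o1, o2, h3 (pr3 (FP o1 o2))) = FP o1 o2" for o1 o2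
  proof -
    have "\<exists>!i. \<omega> (o1, o2, h3 (pr3 i)) = i" using E1[of "\<lambda>_. o1" "\<lambda>_. o2"] by simp
    then show ?thesis unfolding FP_def by (rule theI')
  qed
  have FPuniq: "\<omega> (o1, o2, h3 (pr3 i)) = i \<Longrightarrow> i = FP o1 o2" for o1 o2 i
  proof -
    assume a: "\<omega> (o1, o2, h3 (pr3 i)) = i"
    have "\<exists>!i. \<omega> (o1, o2, h3 (pr3 i)) = i" using E1[of "\<lambda>_. o1" "\<lambda>_. o2"] by simp
    then show ?thesis using a FPfix by blast
  qed
  have K: "\<omega> (hA (pr1 i), hB (pr2 i), h3 (pr3 i)) = i \<Longrightarrow> i = FP (hA (pr1 i)) (hB (pr2 i))"
    for hA hB i using FPuniq by blast
  have Ex: "\<exists>i. \<omega> (hA (pr1 i), hB (pr2 i), h3 (pr3 i)) = i" for hA hB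
    using E1 by blast
  define J1 where "J1 o1 o2 = pr1 (FP o1 o2)" for o1 o2
  define J2 where "J2 o1 o2 = pr2 (FP o1 o2)" for o1 o2
  have A1: "J1 o1 o2 = J1 o1' o2" for o1 o1' o2
  proof (rule ccontr)
    assume ne: "J1 o1 o2 \<noteq> J1 o1' o2"
    define h1 where "h1 j = (if j = J1 o1 o2 then o1' else o1)" for j
    obtain i where fi: "\<omega> (h1 (pr1 i), (\<lambda>_. o2) (pr2 i), h3 (pr3 i)) = i"
      using Ex[where hA=h1 and hB="\<lambda>_. o2"] by blast
    have iK: "i = FP (h1 (pr1 i)) o2" using K[where hA=h1 and hB="\<lambda>_. o2" and i=i] fi by simp
    show False
    proof (cases "pr1 i = J1 o1 o2")
      case True
      then have "i = FP o1' o2" using iK h1_def by simp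
      then have "pr1 i = J1 o1' o2" by (simp add: J1_def)
      then show False using True ne by simp
    next
      case False
      then have "i = FP o1 o2" using iK h1_def by simp
      then have "pr1 i = J1 o1 o2" by (simp add: J1_def)
      then show False using False by simp
    qed
  qed
  have A2: "J2 o1 o2 = J2 o1 o2'" for o1 o2 o2'
  proof (rule ccontr)
    assume ne: "J2 o1 o2 \<noteq> J2 o1 o2'"
    define h2 where "h2 j = (if j = J2 o1 o2 then o2' else o2)" for j
    obtain i where fi: "\<omega> ((\<lambda>_. o1) (pr1 i), h2 (pr2 i), h3 (pr3 i)) = i"
      using Ex[where hA="\<lambda>_. o1" and hB=h2] by blast
    have iK: "i = FP o1 (h2 (pr2 i))" using K[where hA="\<lambda>_. o1" and hB=h2 and i=i] fi by simp
    show False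
    proof (cases "pr2 i = J2 o1 o2")
      case True
      then have "i = FP o1 o2'" using iK h2_def by simp
      then have "pr2 i = J2 o1 o2'" by (simp add: J2_def)
      then show False using True ne by simp
    next
      case False
      then have "i = FP o1 o2" using iK h2_def by simp
      then have "pr2 i = J2 o1 o2" by (simp add: J2_def)
      then show False using False by simp
    qed
  qed
  have B: "(\<forall>o1 o2 o1' o2'. J1 o1 o2 = J1 o1' o2') \<or> (\<forall>o1 o2 o1' o2'. J2 o1 o2 = J2 o1' o2')"
  proof (rule ccontr)
    assume "\<not> ?thesis"
    then obtain p1 o2 q1 o2' r1 r2 o1 o1' where
      n1: "J1 p1 o2 \<noteq> J1 q1 o2'" and n2: "J2 o1 r1 \<noteq> J2 o1' r2" by blast
    have n1': "J1 x o2 \<noteq> J1 x o2'" for x using n1 A1 by metis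
    have n2': "J2 o1 y \<noteq> J2 o1' y" for y using n2 A2 by metis
    define h1 where "h1 j = (if j = J1 o1 o2 then o1' else o1)" for j
    define h2 where "h2 j = (if j = J2 o1 o2 then o2 else o2')" for j
    obtain i where fi: "\<omega> (h1 (pr1 i), h2 (pr2 i), h3 (pr3 i)) = i"
      using Ex by blast
    have iK: "i = FP (h1 (pr1 i)) (h2 (pr2 i))" using K[where hA=h1 and hB=h2 and i=i] fi by simp
    show False
    proof (cases "pr1 i = J1 o1 o2")
      case True
      then have i1: "i = FP o1' (h2 (pr2 i))" using iK h1_def by simp
      then have "pr2 i = J2 o1' (h2 (pr2 i))" by (simp add: J2_def)
      also have "\<dots> = J2 o1' o2" using A2 by metis
      finally have "pr2 i \<noteq> J2 o1 o2" using n2'[of o2] by metis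
      then have "i = FP o1' o2'" using i1 h2_def by simp
      then have "pr1 i = J1 o1' o2'" by (simp add: J1_def)
      also have "\<dots> = J1 o1 o2'" using A1 by metis
      finally show False using True n1'[of o1] by simp
    next
      case False
      then have i1: "i = FP o1 (h2 (pr2 i))" using iK h1_def by simp
      then have "pr2 i = J2 o1 (h2 (pr2 i))" by (simp add: J2_def)
      also have "\<dots> = J2 o1 o2" using A2 by metis
      finally have "i = FP o1 o2" using i1 h2_def by simp
      then have "pr1 i = J1 o1 o2" by (simp add: J1_def)
      then show False using False by simp
    qed
  qed
  have C: "fst (g1 a1 (J1 (snd (g1 a1 (pr1 i))) (snd (g2 a2 (pr2 i))))) = a2 \<and>
           fst (g2 a2 (J2 (snd (g1 a1 (pr1 i))) (snd (g2 a2 (pr2 i))))) = a1"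
    if fi: "\<omega> (snd (g1 a1 (pr1 i)), snd (g2 a2 (pr2 i)), h3 (pr3 i)) = i" for a1 a2 i
  proof -
    have iK: "i = FP (snd (g1 a1 (pr1 i))) (snd (g2 a2 (pr2 i)))"
      using K[where hA="\<lambda>j. snd (g1 a1 j)" and hB="\<lambda>j. snd (g2 a2 j)" and i=i] fi by simp
    have "pr1 i = J1 (snd (g1 a1 (pr1 i))) (snd (g2 a2 (pr2 i)))"
      "pr2 i = J2 (snd (g1 a1 (pr1 i))) (snd (g2 a2 (pr2 i)))"
      using iK unfolding J1_def J2_def by metis+
    then show ?thesis using H fi unfolding h3_def by metis
  qed
  have Ex2: "\<exists>i. \<omega> (snd (g1 a1 (pr1 i)), snd (g2 a2 (pr2 i)), h3 (pr3 i)) = i" for a1 a2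
    using Ex[where hA="\<lambda>j. snd (g1 a1 j)" and hB="\<lambda>j. snd (g2 a2 j)"] by simp
  from B show False
  proof
    assume c: "\<forall>o1 o2 o1' o2'. J1 o1 o2 = J1 o1' o2'"
    obtain i where "\<omega> (snd (g1 False (pr1 i)), snd (g2 False (pr2 i)), h3 (pr3 i)) = i"
      using Ex2 by blast
    from C[OF this] have x: "fst (g1 False (J1 undefined undefined)) = False" using c by metis
    obtain i' where "\<omega> (snd (g1 False (pr1 i')), snd (g2 True (pr2 i')), h3 (pr3 i')) = i'"
      using Ex2 by blast
    from C[OF this] have "fst (g1 False (J1 undefined undefined)) = True" using c by metis
    with x show False by simp
  next
    assume c: "\<forall>o1 o2 o1' o2'. J2 o1 o2 = J2 o1' o2'"
    obtain i where "\<omega> (snd (g1 False (pr1 i)), snd (g2 False (pr2 i)), h3 (pr3 i)) = i"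
      using Ex2 by blast
    from C[OF this] have x: "fst (g2 False (J2 undefined undefined)) = False" using c by metis
    obtain i' where "\<omega> (snd (g1 True (pr1 i')), snd (g2 False (pr2 i')), h3 (pr3 i')) = i'"
      using Ex2 by blast
    from C[OF this] have "fst (g2 False (J2 undefined undefined)) = True" using c by metis
    with x show False by simp
  qed
qed

definition G :: "(bool \<Rightarrow> 'i \<Rightarrow> bool \<times> 'o \<Rightarrow> real) \<Rightarrow> bool \<Rightarrow> 'i \<Rightarrow> bool \<times> 'o" where
  "G P a j = (SOME xo. 0 < P a j xo)"

lemma Gpos:
  fixes P :: "bool \<Rightarrow> 'i::finite \<Rightarrow> bool \<times> 'o::finite \<Rightarrow> real"
  assumes "local_intervention P"
  shows "0 < P a j (G P a j)"
proof -
  have nn: "\<And>xo. 0 \<le> P a j xo" and s: "(\<Sum>xo\<in>UNIV. P a j xo) = 1"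
    using assms unfolding local_intervention_def by auto
  have "\<exists>xo. P a j xo \<noteq> 0"
  proof (rule ccontr)
    assume "\<not> ?thesis"
    then have "(\<Sum>xo\<in>UNIV. P a j xo) = 0" by (intro sum.neutral) auto
    with s show False by simp
  qed
  then have "\<exists>xo. 0 < P a j xo" using nn by (metis less_le)
  then show ?thesis unfolding G_def by (rule someI_ex)
qed

lemma reduce:
  fixes P1 :: "bool \<Rightarrow> 'i1::finite \<Rightarrow> bool \<times> 'o1::finite \<Rightarrow> real"
    and P2 :: "bool \<Rightarrow> 'i2::finite \<Rightarrow> bool \<times> 'o2::finite \<Rightarrow> real"
    and P3 :: "bool \<Rightarrow> 'i3::finite \<Rightarrow> bool \<times> 'o3::finite \<Rightarrow> real"
  assumes L1: "local_intervention P1" and L2: "local_intervention P2" and L3: "local_intervention P3"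
    and Wnn: "\<And>i oo. 0 \<le> W i oo"
    and eq: "induced_corr P1 P2 P3 W = det_corr f_xor"
    and pos: "0 < W i (snd (G P1 a1 (pr1 i)), snd (G P2 a2 (pr2 i)), snd (G P3 a3 (pr3 i)))"
  shows "fst (G P1 a1 (pr1 i)) = xor2 a2 a3 \<and> fst (G P2 a2 (pr2 i)) = xor2 a3 a1"
proof -
  define oo where "oo = (snd (G P1 a1 (pr1 i)), snd (G P2 a2 (pr2 i)), snd (G P3 a3 (pr3 i)))"
  define x where "x = (fst (G P1 a1 (pr1 i)), fst (G P2 a2 (pr2 i)), fst (G P3 a3 (pr3 i)))"
  define a where "a = (a1, a2, a3)"
  define F where "F i' oo' = P1 (pr1 a) (pr1 i') (pr1 x, pr1 oo') * P2 (pr2 a) (pr2 i') (pr2 x, pr2 oo') *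
        P3 (pr3 a) (pr3 i') (pr3 x, pr3 oo') * W i' oo'" for i' oo'
  have Fnn: "0 \<le> F i' oo'" for i' oo'
    using L1 L2 L3 Wnn unfolding F_def local_intervention_def by simp
  have "F i oo = P1 a1 (pr1 i) (G P1 a1 (pr1 i)) * P2 a2 (pr2 i) (G P2 a2 (pr2 i)) *
        P3 a3 (pr3 i) (G P3 a3 (pr3 i)) * W i oo"
    unfolding F_def x_def oo_def a_def pr1_def pr2_def pr3_def by simp
  moreover have "0 < \<dots>"
    using Gpos[OF L1] Gpos[OF L2] Gpos[OF L3] pos oo_def by simp
  ultimately have Fp: "0 < F i oo" by simp
  have "F i oo \<le> (\<Sum>oo'\<in>UNIV. F i oo')"
    by (rule member_le_sum) (auto simp: Fnn)
  also have "\<dots> \<le> (\<Sum>i'\<in>UNIV. \<Sum>oo'\<in>UNIV. F i' oo')"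
    by (rule member_le_sum[where f="\<lambda>i'. \<Sum>oo'\<in>UNIV. F i' oo'"]) (auto intro: sum_nonneg Fnn)
  also have "\<dots> = induced_corr P1 P2 P3 W x a"
    unfolding induced_corr_def F_def by simp
  also have "\<dots> = det_corr f_xor x a" using eq by simp
  finally have "0 < det_corr f_xor x a" using Fp by linarith
  then have "x = f_xor a" unfolding det_corr_def by (auto split: if_splits)
  then show ?thesis unfolding x_def a_def f_xor_def pr1_def pr2_def pr3_def by simp
qed

theorem mainTheorem8:
  shows "(\<forall>\<omega> :: ('o1::finite \<times> 'o2::finite \<times> 'o3::finite \<Rightarrow> 'i1::finite \<times> 'i2::finite \<times> 'i3::finite).
            process_function \<omega> \<longrightarrow> \<not> realized_by \<omega> (det_corr f_xor))
       \<and> \<not> det_consistent TYPE('o1 \<times> 'o2 \<times> 'o3 \<Rightarrow> 'i1 \<times> 'i2 \<times> 'i3) (det_corr f_xor)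
       \<and> (\<forall>k\<in>{1,2,3}. \<forall>l\<in>{1,2,3}. sig_edge f_xor k l \<longleftrightarrow> k \<noteq> l)"
proof (intro conjI)
  show "\<forall>\<omega> :: ('o1::finite \<times> 'o2::finite \<times> 'o3::finite \<Rightarrow> 'i1::finite \<times> 'i2::finite \<times> 'i3::finite).
            process_function \<omega> \<longrightarrow> \<not> realized_by \<omega> (det_corr f_xor)"
  proof (intro allI impI notI)
    fix \<omega> :: "'o1 \<times> 'o2 \<times> 'o3 \<Rightarrow> 'i1 \<times> 'i2 \<times> 'i3"
    assume pf: "process_function \<omega>" and "realized_by \<omega> (det_corr f_xor)"
    then obtain P1 :: "bool \<Rightarrow> 'i1 \<Rightarrow> bool \<times> 'o1 \<Rightarrow> real" and P2 :: "bool \<Rightarrow> 'i2 \<Rightarrow> bool \<times> 'o2 \<Rightarrow> real"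
      and P3 :: "bool \<Rightarrow> 'i3 \<Rightarrow> bool \<times> 'o3 \<Rightarrow> real" where
      L: "local_intervention P1" "local_intervention P2" "local_intervention P3"
      and eq: "det_corr f_xor = induced_corr P1 P2 P3 (\<lambda>i oo. if i = \<omega> oo then 1 else 0)"
      unfolding realized_by_def by blast
    have H: "fst (G P1 a1 (pr1 i)) = a2 \<and> fst (G P2 a2 (pr2 i)) = a1"
      if fi: "\<omega> (snd (G P1 a1 (pr1 i)), snd (G P2 a2 (pr2 i)), snd (G P3 False (pr3 i))) = i"
      for a1 a2 i
    proof -
      have "fst (G P1 a1 (pr1 i)) = xor2 a2 False \<and> fst (G P2 a2 (pr2 i)) = xor2 False a1"
        by (rule reduce[OF L(1) L(2) L(3), where W="\<lambda>i oo. if i = \<omega> oo then 1 else 0"])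
           (use eq fi in auto)
      then show "fst (G P1 a1 (pr1 i)) = a2 \<and> fst (G P2 a2 (pr2 i)) = a1"
        by (simp add: xor2_def)
    qed
    show False by (rule core[of \<omega> "G P1" "G P2" "G P3", OF pf H])
  qed
  show "\<not> det_consistent TYPE('o1 \<times> 'o2 \<times> 'o3 \<Rightarrow> 'i1 \<times> 'i2 \<times> 'i3) (det_corr f_xor)"
  proof
    assume "det_consistent TYPE('o1 \<times> 'o2 \<times> 'o3 \<Rightarrow> 'i1 \<times> 'i2 \<times> 'i3) (det_corr f_xor)"
    then obtain lam :: "('o1 \<times> 'o2 \<times> 'o3 \<Rightarrow> 'i1 \<times> 'i2 \<times> 'i3) \<Rightarrow> real"
      and P1 :: "bool \<Rightarrow> 'i1 \<Rightarrow> bool \<times> 'o1 \<Rightarrow> real" and P2 :: "bool \<Rightarrow> 'i2 \<Rightarrow> bool \<times> 'o2 \<Rightarrow> real"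
      and P3 :: "bool \<Rightarrow> 'i3 \<Rightarrow> bool \<times> 'o3 \<Rightarrow> real" where
      nn: "\<forall>w. 0 \<le> lam w" and pfs: "\<forall>w. lam w \<noteq> 0 \<longrightarrow> process_function w"
      and s1: "(\<Sum>w\<in>UNIV. lam w) = 1"
      and L: "local_intervention P1" "local_intervention P2" "local_intervention P3"
      and eq: "det_corr f_xor = induced_corr P1 P2 P3 (\<lambda>i oo. \<Sum>w\<in>UNIV. lam w * (if i = w oo then 1 else 0))"
      unfolding det_consistent_def by blast
    have "\<exists>w. lam w \<noteq> 0"
    proof (rule ccontr)
      assume "\<not> ?thesis"
      then have "(\<Sum>w\<in>UNIV. lam w) = 0" by simp
      with s1 show False by simp
    qed
    then obtain \<omega> where lp: "lam \<omega> \<noteq> 0" by blast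
    then have lpos: "0 < lam \<omega>" using nn by (metis less_le)
    have pf: "process_function \<omega>" using pfs lp by blast
    define W where "W = (\<lambda>i oo. \<Sum>w\<in>UNIV. lam w * (if i = w oo then 1 else 0))"
    have Wnn: "0 \<le> W i oo" for i oo unfolding W_def using nn by (intro sum_nonneg) simp
    have H: "fst (G P1 a1 (pr1 i)) = a2 \<and> fst (G P2 a2 (pr2 i)) = a1"
      if fi: "\<omega> (snd (G P1 a1 (pr1 i)), snd (G P2 a2 (pr2 i)), snd (G P3 False (pr3 i))) = i"
      for a1 a2 i
    proof -
      let ?oo = "(snd (G P1 a1 (pr1 i)), snd (G P2 a2 (pr2 i)), snd (G P3 False (pr3 i)))"
      have "lam \<omega> * (if i = \<omega> ?oo then 1 else 0) \<le> W i ?oo"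
        unfolding W_def
        by (rule member_le_sum[where f="\<lambda>w. lam w * (if i = w ?oo then 1 else 0)"]) (auto simp: nn)
      then have Wp: "0 < W i ?oo" using fi lpos by simp
      have "fst (G P1 a1 (pr1 i)) = xor2 a2 False \<and> fst (G P2 a2 (pr2 i)) = xor2 False a1"
        by (rule reduce[OF L(1) L(2) L(3), where W=W]) (use eq Wnn Wp W_def in simp_all)
      then show "fst (G P1 a1 (pr1 i)) = a2 \<and> fst (G P2 a2 (pr2 i)) = a1"
        by (simp add: xor2_def)
    qed
    show False by (rule core[of \<omega> "G P1" "G P2" "G P3", OF pf H])
  qed
  show "\<forall>k\<in>{1,2,3}. \<forall>l\<in>{1,2,3}. sig_edge f_xor k l \<longleftrightarrow> k \<noteq> l" by (rule sig_part)
qed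

end
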